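(* For integers $n\ge k\ge 0$ define the Salié coefficients $s(n,k)$ by $$\sum_{n,k\ge 0}\frac{x^{2n}}{(2n)!}\,s(n,k)\,y^{k}=\frac{\cosh\!\left(\tfrac12 x\sqrt{1+4y}\right)}{\cosh\!\left(\tfrac12 x\right)},$$ and set $\epsilon(n,k)=|s(n,k)|/4^{k}$. Then for all $n>1$ and $1\le k\le n-1$, $$\epsilon(n,k)>2\,\epsilon(n,k+1)\quad\text{and}\quad \epsilon(n,k)>\sum_{l=k+1}^{n}\epsilon(n,l).$$ *)

theory Defs
  imports Complex_Main "HOL-Computational_Algebra.Polynomial" "HOL-Computational_Algebra.Formal_Power_Series"
begin

text \<open>Bivariate generating functions are represented as formal power series in x
whose coefficients are real polynomials in y.\<close>

text \<open>Numerator: cosh((1/2) x sqrt(1+4y)) = sum over even m of (x/2)^m (1+4y)^(m/2) / m!.\<close>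
definition salie_num :: "real poly fps" where
  "salie_num = Abs_fps (\<lambda>m. if even m
      then smult ((1/2)^m / fact m) ([:1, 4:] ^ (m div 2)) else 0)"

text \<open>Denominator: cosh(x/2) = sum over even m of (x/2)^m / m!.\<close>
definition salie_den :: "real poly fps" where
  "salie_den = Abs_fps (\<lambda>m. if even m then [: (1/2)^m / fact m :] else 0)"

text \<open>The quotient; the denominator has constant term 1, so it is invertible.\<close>
definition salie_gf :: "real poly fps" where
  "salie_gf = salie_num * fps_right_inverse salie_den 1"

definition salie :: "nat \<Rightarrow> nat \<Rightarrow> real" where
  "salie n k = fact (2*n) * coeff (fps_nth salie_gf (2*n)) k"

definition salie_eps :: "nat \<Rightarrow> nat \<Rightarrow> real" where
  "salie_eps n k = \<bar>salie n k\<bar> / 4 ^ k"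

lemma salie_den_inverse: "salie_den * fps_right_inverse salie_den 1 = 1"
  by (rule fps_right_inverse) (simp add: salie_den_def)

end

theory Submission
  imports Defs
begin

unbundle fps_syntax

definition Dc :: "real fps" where
  "Dc = Abs_fps (\<lambda>m. if even m then (1/2)^m / fact m else 0)"
definition Sc :: "real fps" where
  "Sc = Abs_fps (\<lambda>m. if odd m then (1/2)^m / fact m else 0)"
definition Nk :: "nat \<Rightarrow> real fps" where
  "Nk k = Abs_fps (\<lambda>m. if even m then (1/2)^m / fact m * (of_nat (m div 2 choose k) * 4^k) else 0)"
definition Gk :: "nat \<Rightarrow> real fps" where
  "Gk k = Abs_fps (\<lambda>m. coeff (salie_gf $ m) k)"

lemma half_fact_Suc: "real (Suc m) * ((1/2)^(Suc m) / fact (Suc m)) = (1/2) * ((1/2)^m / fact m)"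
  by (simp add: fact_Suc)

lemma Dc0: "Dc $ 0 = 1" by (simp add: Dc_def)

lemma deriv_Dc: "fps_deriv Dc = fps_const (1/2) * Sc"
proof (rule fps_ext)
  fix m
  show "fps_deriv Dc $ m = (fps_const (1/2) * Sc) $ m"
    by (cases "even m") (simp_all add: Dc_def Sc_def half_fact_Suc[simplified])
qed

lemma deriv_Sc: "fps_deriv Sc = fps_const (1/2) * Dc"
proof (rule fps_ext)
  fix m
  show "fps_deriv Sc $ m = (fps_const (1/2) * Dc) $ m"
    by (cases "even m") (simp_all add: Dc_def Sc_def half_fact_Suc[simplified])
qed

lemma coeff_lin_pow: "coeff ([:1,4:]^j) k = of_nat (j choose k) * (4::real)^k"
proof (induction j arbitrary: k)
  case 0
  then show ?case by (cases k) auto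
next
  case (Suc j)
  have e: "[:1,4:]^Suc j = [:1,4:]^j + pCons 0 (smult 4 ([:1,4::real:]^j))"
    by (simp add: mult_pCons_left algebra_simps)
  show ?case
  proof (cases k)
    case 0 then show ?thesis using Suc by (simp add: e)
  next
    case (Suc k')
    then show ?thesis using Suc.IH by (simp add: e algebra_simps)
  qed
qed

lemma gf_den: "salie_gf * salie_den = salie_num"
proof -
  have "salie_gf * salie_den = salie_num * (fps_right_inverse salie_den 1 * salie_den)"
    by (simp add: salie_gf_def mult.assoc)
  also have "fps_right_inverse salie_den 1 * salie_den = 1"
    using salie_den_inverse by (simp add: mult.commute)
  finally show ?thesis by simp
qed

lemma GD: "Gk k * Dc = Nk k"
proof (rule fps_ext)
  fix m
  have den: "salie_den $ j = [: Dc $ j :]" for j by (simp add: salie_den_def Dc_def)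
  have "(Gk k * Dc) $ m = coeff ((salie_gf * salie_den) $ m) k"
    by (simp add: fps_mult_nth Gk_def den coeff_sum mult.commute)
  also have "\<dots> = Nk k $ m"
    by (simp add: gf_den salie_num_def Nk_def coeff_lin_pow)
  finally show "(Gk k * Dc) $ m = Nk k $ m" .
qed

lemma Nk0: "Nk 0 = Dc"
  by (rule fps_ext) (simp add: Nk_def Dc_def)

lemma Nk1: "Nk 1 = fps_X * Sc"
proof (rule fps_ext)
  fix m
  show "Nk 1 $ m = (fps_X * Sc) $ m"
  proof (cases m)
    case 0 then show ?thesis by (simp add: Nk_def)
  next
    case (Suc j)
    show ?thesis
    proof (cases "odd j")
      case True
      then obtain a where a: "j = 2*a+1" by (metis oddE)
      have "Suc j = 2*(a+1)" using a by simp
      then have d: "Suc j div 2 = a + 1" by simp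
      have f: "fact (Suc j) = (2*real a + 2) * (fact j :: real)" by (simp add: fact_Suc a)
      have p: "(1/2::real)^(Suc j) = (1/2)^j/2" by simp
      have g: "\<And>p F::real. F > 0 \<Longrightarrow> (p/2)/((2*real a+2)*F)*((real a+1)*4) = p/F"
      proof -
        fix p F :: real assume F: "F > 0"
        have "(2*real a+2)*F > 0" using F by (intro mult_pos_pos) auto
        then show "(p/2)/((2*real a+2)*F)*((real a+1)*4) = p/F" using F
          by (simp add: field_simps)
      qed
      have "Nk 1 $ m = (1/2)^(Suc j) / fact (Suc j) * (real (a+1) * 4)"
        using Suc a d by (simp add: Nk_def)
      also have "\<dots> = (1/2)^j / fact j" unfolding f p using g[of "fact j" "(1/2)^j"] by (simp add: add.commute)
      also have "\<dots> = (fps_X * Sc) $ m" using Suc True by (simp add: Sc_def)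
      finally show ?thesis .
    next
      case False
      then show ?thesis using Suc by (simp add: Nk_def Sc_def)
    qed
  qed
qed

lemma Nk_low: "m < 2*k \<Longrightarrow> Nk k $ m = 0"
  by (simp add: Nk_def, presburger)

lemma Nk_deriv2:
  assumes "k \<ge> 1"
  shows "fps_deriv (fps_deriv (Nk k)) = fps_const (1/4) * Nk k + Nk (k-1)"
proof (rule fps_ext)
  fix m
  obtain k' where k: "k = Suc k'" using assms by (cases k) auto
  show "fps_deriv (fps_deriv (Nk k)) $ m = (fps_const (1/4) * Nk k + Nk (k-1)) $ m"
  proof (cases "even m")
    case True
    then obtain a where a: "m = 2*a" by blast
    have d: "Suc (Suc m) div 2 = Suc a" using a by simp
    have f: "fact (Suc (Suc m)) = (real m + 1) * (real m + 2) * (fact m :: real)"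
      by (simp add: fact_Suc algebra_simps)
    have p: "(1/2::real)^(Suc (Suc m)) = (1/2)^m/4" by simp
    have c: "real (Suc a choose Suc k') = real (a choose k') + real (a choose Suc k')" by simp
    have g: "\<And>p F c1 c2 q::real. F > 0 \<Longrightarrow>
       (real m + 1) * ((real m + 2) * ((p/4) / ((real m + 1) * (real m + 2) * F) * ((c1 + c2) * (4*q))))
       = 1/4 * (p/F * (c2 * (4*q))) + p/F * (c1 * q)"
    proof -
      fix p F c1 c2 q :: real assume F: "F > 0"
      have "(real m + 1) * (real m + 2) * F > 0" using F by (intro mult_pos_pos) auto
      then show "(real m + 1) * ((real m + 2) * ((p/4) / ((real m + 1) * (real m + 2) * F) * ((c1 + c2) * (4*q))))
       = 1/4 * (p/F * (c2 * (4*q))) + p/F * (c1 * q)" using F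
        by (simp add: field_simps)
    qed
    have "fps_deriv (fps_deriv (Nk k)) $ m = (real m + 1) * ((real m + 2) *
        ((1/2)^(Suc (Suc m)) / fact (Suc (Suc m)) * (real (Suc a choose Suc k') * (4 * 4^k'))))"
      using True a d k by (simp add: Nk_def algebra_simps)
    also have "\<dots> = 1/4 * ((1/2)^m / fact m * (real (a choose Suc k') * (4 * 4^k')))
        + (1/2)^m / fact m * (real (a choose k') * 4^k')"
      unfolding f p c using g[of "fact m"] by simp
    also have "\<dots> = (fps_const (1/4) * Nk k + Nk (k-1)) $ m"
      using True a k by (simp add: Nk_def)
    finally show ?thesis .
  next
    case False
    then show ?thesis by (simp add: Nk_def)
  qed
qed

definition th :: "real fps" where "th = Sc * inverse Dc"

lemma Dc_inv: "Dc * inverse Dc = 1"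
  by (rule inverse_mult_eq_1') (simp add: Dc0)

lemma th_D: "th * Dc = Sc"
  by (simp add: th_def mult.assoc mult.commute[of "inverse Dc"] Dc_inv)

lemma Gk_eq: "Gk k = Nk k * inverse Dc"
proof -
  have "Gk k = Gk k * (Dc * inverse Dc)" by (simp add: Dc_inv)
  also have "\<dots> = Nk k * inverse Dc" by (simp add: GD mult.assoc[symmetric])
  finally show ?thesis .
qed

lemma G0: "Gk 0 = 1"
  by (simp add: Gk_eq Nk0 Dc_inv)

lemma G1: "Gk 1 = fps_X * th"
  unfolding Gk_eq Nk1 th_def by (simp add: mult.assoc)

lemma Gk_low: "m < 2*k \<Longrightarrow> Gk k $ m = 0"
  by (simp add: Gk_eq fps_mult_nth Nk_low)

lemma th_ode: "fps_deriv th + fps_const (1/2) * (th * th) = fps_const (1/2)"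
proof -
  have "fps_deriv (th * Dc) = fps_deriv Sc" by (simp add: th_D)
  then have "th * (fps_const (1/2) * Sc) + fps_deriv th * Dc = fps_const (1/2) * Dc"
    by (simp add: deriv_Dc deriv_Sc)
  then have "(th * (fps_const (1/2) * Sc) + fps_deriv th * Dc) * inverse Dc = fps_const (1/2) * Dc * inverse Dc"
    by simp
  then have "fps_const (1/2) * (th * (Sc * inverse Dc)) + fps_deriv th * (Dc * inverse Dc) = fps_const (1/2) * (Dc * inverse Dc)"
    by (simp add: algebra_simps)
  then show ?thesis by (simp add: Dc_inv th_def[symmetric] algebra_simps)
qed

lemma G_ode:
  assumes "k \<ge> 1"
  shows "fps_deriv (fps_deriv (Gk k)) + th * fps_deriv (Gk k) = Gk (k-1)"
proof -
  have "fps_deriv (fps_deriv (Gk k * Dc)) = fps_deriv (fps_deriv (Nk k))" by (simp add: GD)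
  also have "\<dots> = fps_const (1/4) * (Gk k * Dc) + Gk (k-1) * Dc"
    by (simp add: Nk_deriv2[OF assms] GD)
  finally have e: "fps_deriv (fps_deriv (Gk k * Dc)) = fps_const (1/4) * (Gk k * Dc) + Gk (k-1) * Dc" .
  have c: "fps_const (1/2) * fps_const (1/2) = (fps_const (1/4) :: real fps)"
    by (simp add: fps_const_mult[symmetric])
  have hh: "fps_const (1/2) + fps_const (1/2) = (1::real fps)"
    by (simp add: fps_const_add)
  have d1: "fps_deriv (Gk k * Dc) = fps_const (1/2) * (Gk k * Sc) + fps_deriv (Gk k) * Dc"
    by (simp add: deriv_Dc algebra_simps)
  have d2: "fps_deriv (Gk k * Sc) = fps_const (1/2) * (Gk k * Dc) + fps_deriv (Gk k) * Sc"
    by (simp add: deriv_Sc algebra_simps)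
  have d3: "fps_deriv (fps_deriv (Gk k) * Dc) = fps_const (1/2) * (fps_deriv (Gk k) * Sc) + fps_deriv (fps_deriv (Gk k)) * Dc"
    by (simp add: deriv_Dc algebra_simps)
  have "fps_deriv (fps_deriv (Gk k * Dc)) = fps_const (1/2) * (fps_const (1/2) * (Gk k * Dc) + fps_deriv (Gk k) * Sc)
     + (fps_const (1/2) * (fps_deriv (Gk k) * Sc) + fps_deriv (fps_deriv (Gk k)) * Dc)"
    by (simp only: d1 fps_deriv_add fps_deriv_mult_const_left d2 d3)
  also have "\<dots> = fps_deriv (fps_deriv (Gk k)) * Dc + fps_deriv (Gk k) * Sc
     + fps_const (1/2) * fps_const (1/2) * (Gk k * Dc)" using hh by algebra
  finally have ee: "fps_deriv (fps_deriv (Gk k * Dc)) = fps_deriv (fps_deriv (Gk k)) * Dc + fps_deriv (Gk k) * Sc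
     + fps_const (1/4) * (Gk k * Dc)" by (simp only: c)
  from ee e have "fps_deriv (fps_deriv (Gk k)) * Dc + fps_deriv (Gk k) * Sc + fps_const (1/4) * (Gk k * Dc)
     = Gk (k-1) * Dc + fps_const (1/4) * (Gk k * Dc)"
    by (metis add.commute)
  then have "fps_deriv (fps_deriv (Gk k)) * Dc + fps_deriv (Gk k) * Sc = Gk (k-1) * Dc"
    by (simp only: add_right_cancel)
  then have "(fps_deriv (fps_deriv (Gk k)) * Dc + fps_deriv (Gk k) * Sc) * inverse Dc = Gk (k-1) * Dc * inverse Dc"
    by simp
  then have "fps_deriv (fps_deriv (Gk k)) * (Dc * inverse Dc) + fps_deriv (Gk k) * (Sc * inverse Dc) = Gk (k-1) * (Dc * inverse Dc)"
    by (simp add: algebra_simps)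
  then show ?thesis by (simp add: Dc_inv th_def[symmetric] algebra_simps)
qed

definition par :: "nat \<Rightarrow> real fps \<Rightarrow> bool" where
  "par p A \<longleftrightarrow> (\<forall>m. odd (m + p) \<longrightarrow> A $ m = 0)"

lemma par_Dc: "par 0 Dc" by (simp add: par_def Dc_def)
lemma par_Sc: "par 1 Sc" by (simp add: par_def Sc_def)
lemma par_Nk: "par 0 (Nk k)" by (simp add: par_def Nk_def)

lemma par_div:
  assumes "A * Dc = B" "par p B"
  shows "par p A"
  unfolding par_def
proof (intro allI)
  fix m
  show "odd (m + p) \<longrightarrow> A $ m = 0"
  proof (induction m rule: less_induct)
    case (less m)
    show ?case
    proof
      assume om: "odd (m + p)"
      have "B $ m = (\<Sum>i=0..m. A $ i * Dc $ (m - i))" using assms(1) fps_mult_nth[of A Dc m] by simp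
      also have "\<dots> = (\<Sum>i\<in>{0..<m}. A $ i * Dc $ (m - i)) + A $ m * Dc $ 0"
        by (simp add: sum.atLeast0_atMost_Suc atLeast0AtMost atLeast0LessThan lessThan_Suc_atMost[symmetric])
      also have "(\<Sum>i\<in>{0..<m}. A $ i * Dc $ (m - i)) = 0"
      proof (rule sum.neutral, intro ballI)
        fix i assume i: "i \<in> {0..<m}"
        show "A $ i * Dc $ (m - i) = 0"
        proof (cases "odd (i + p)")
          case True then show ?thesis using less.IH[of i] i by simp
        next
          case False
          then have "odd (m - i)" using om i by auto
          then have "Dc $ (m - i) = 0" using par_Dc by (simp add: par_def)
          then show ?thesis by simp
        qed
      qed
      finally show "A $ m = 0" using assms(2) om by (simp add: par_def Dc0)
    qed
  qed
qed

lemma par_th: "par 1 th" using par_div[OF th_D par_Sc] .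
lemma par_G: "par 0 (Gk k)" using par_div[OF GD par_Nk] .

definition sg :: "nat \<Rightarrow> real" where "sg m = (-1)^(m div 2)"

lemma sg_oo: "odd i \<Longrightarrow> odd j \<Longrightarrow> sg i * sg j = - sg (i+j)"
proof -
  assume "odd i" "odd j"
  then obtain a b where a: "i = 2*a+1" and b: "j = 2*b+1" by (metis oddE)
  have "(i+j) div 2 = Suc (a+b)" using a b by simp
  then show ?thesis using a b by (simp add: sg_def power_add)
qed

lemma sg_oe: "odd i \<Longrightarrow> even j \<Longrightarrow> sg i * sg j = sg (i+j-1)"
proof -
  assume "odd i" "even j"
  then obtain a b where a: "i = 2*a+1" and b: "j = 2*b" by (metis oddE evenE)
  have "(i+j-1) div 2 = a+b" using a b by simp
  then show ?thesis using a b by (simp add: sg_def power_add)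
qed

lemma sg_Suc2: "sg (Suc (Suc m)) = - sg m"
  by (simp add: sg_def)

lemma sg_abs: "\<bar>sg m\<bar> = 1" by (simp add: sg_def)

definition st :: "nat \<Rightarrow> real" where "st i = sg i * th $ i"

lemma th_even: "even i \<Longrightarrow> th $ i = 0"
  using par_th by (simp add: par_def)

lemma th_rec: "real (m+1) * th $ (m+1) + 1/2 * (\<Sum>i=0..m. th $ i * th $ (m-i)) = (if m = 0 then 1/2 else 0)"
proof -
  have "(fps_deriv th + fps_const (1/2) * (th * th)) $ m = fps_const (1/2) $ m" by (simp only: th_ode)
  moreover have "(fps_deriv th + fps_const (1/2) * (th * th)) $ m = real (m+1) * th $ (m+1) + 1/2 * (th * th) $ m"
    by simp
  ultimately show ?thesis unfolding fps_mult_nth[of th th] by simp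
qed

lemma th1: "th $ 1 = 1/2"
  using th_rec[of 0] th_even[of 0] by simp

lemma st_pos: "st i \<ge> 0 \<and> (odd i \<longrightarrow> st i > 0)"
proof (induction i rule: less_induct)
  case (less i)
  show ?case
  proof (cases "even i")
    case True
    then show ?thesis by (simp add: st_def th_even)
  next
    case False
    obtain m where im: "i = Suc m" using False by (cases i) auto
    have me: "even m" using False im by simp
    show ?thesis
    proof (cases "m = 0")
      case True
      then show ?thesis using im th1 by (simp add: st_def sg_def)
    next
      case False
      have "m \<noteq> 1" using me by auto
      then have m2: "m \<ge> 2" using False by linarith
      have rec: "real (m+1) * th $ (m+1) = - 1/2 * (\<Sum>i=0..m. th $ i * th $ (m-i))"
        using th_rec[of m] False by simp
      have sgm: "sg (m+1) = sg m" using me by (simp add: sg_def)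
      have trm: "- sg m * (th $ j * th $ (m-j)) = st j * st (m-j)" if j: "j \<le> m" for j
      proof (cases "even j")
        case True then show ?thesis by (simp add: st_def th_even)
      next
        case False
        then have "odd (m-j)" using me j by simp
        then have a: "sg j * sg (m-j) = - sg m" using sg_oo[OF False] j by simp
        have "st j * st (m-j) = (sg j * sg (m-j)) * (th $ j * th $ (m-j))" by (simp add: st_def algebra_simps)
        then show ?thesis unfolding a by simp
      qed
      have sd: "(\<Sum>j=0..m. - sg m * (th $ j * th $ (m-j))) = - sg m * (\<Sum>j=0..m. th $ j * th $ (m-j))"
        by (simp add: sum_distrib_left)
      have "real (m+1) * st (m+1) = sg m * (real (m+1) * th $ (m+1))" using sgm by (simp add: st_def)
      also have "\<dots> = sg m * (- 1/2 * (\<Sum>j=0..m. th $ j * th $ (m-j)))" by (simp only: rec)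
      also have "\<dots> = 1/2 * (\<Sum>j=0..m. - sg m * (th $ j * th $ (m-j)))" unfolding sd by simp
      also have "\<dots> = 1/2 * (\<Sum>j=0..m. st j * st (m-j))"
        using trm by simp
      finally have e: "real (m+1) * st (m+1) = 1/2 * (\<Sum>j=0..m. st j * st (m-j))" .
      have nn: "\<And>j. j \<in> {0..m} \<Longrightarrow> st j * st (m-j) \<ge> 0"
        using less.IH im by (simp add: le_imp_less_Suc)
      have "st 1 * st (m-1) \<le> (\<Sum>j=0..m. st j * st (m-j))"
        using member_le_sum[of 1 "{0..m}" "\<lambda>j. st j * st (m-j)"] nn m2 by simp
      moreover have "st 1 * st (m-1) > 0"
      proof -
        have "st 1 > 0" using th1 by (simp add: st_def sg_def)
        moreover have "st (m-1) > 0" using less.IH[of "m-1"] im me m2 by simp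
        ultimately show ?thesis by simp
      qed
      ultimately have "real (m+1) * st (m+1) > 0" using e by linarith
      then have "st (m+1) > 0" by (simp add: zero_less_mult_iff)
      then show ?thesis using im by simp
    qed
  qed
qed


definition gh :: "nat \<Rightarrow> nat \<Rightarrow> real" where "gh k m = (-1)^k * sg m * Gk k $ m"

lemma G_rec:
  assumes "k \<ge> 1"
  shows "real (m+1) * (real (m+2) * Gk k $ (m+2)) + (\<Sum>i=0..m. th $ i * (real (m-i+1) * Gk k $ (m-i+1))) = Gk (k-1) $ m"
proof -
  have "(fps_deriv (fps_deriv (Gk k)) + th * fps_deriv (Gk k)) $ m = Gk (k-1) $ m" by (simp only: G_ode[OF assms])
  moreover have "(fps_deriv (fps_deriv (Gk k)) + th * fps_deriv (Gk k)) $ m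
     = real (m+1) * (real (m+2) * Gk k $ (m+2)) + (\<Sum>i=0..m. th $ i * (real (m-i+1) * Gk k $ (m-i+1)))"
    by (simp add: fps_mult_nth[of th] Suc_diff_le algebra_simps)
  ultimately show ?thesis by simp
qed

lemma G_even: "odd m \<Longrightarrow> Gk k $ m = 0"
  using par_G[of k] by (simp add: par_def)

lemma gh_rec:
  assumes "k \<ge> 1"
  shows "real (m+1) * real (m+2) * gh k (m+2) = gh (k-1) m + (\<Sum>i=0..m. real (m-i+1) * (st i * gh k (m-i+1)))"
proof -
  define s0 where "s0 = (-1::real)^k * sg m"
  have km: "(-1::real)^k = - ((-1)^(k-1))" using assms by (cases k) auto
  have t: "s0 * (th $ i * (real (m-i+1) * Gk k $ (m-i+1))) = real (m-i+1) * (st i * gh k (m-i+1))"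
    if i: "i \<le> m" for i
  proof (cases "th $ i = 0 \<or> Gk k $ (m-i+1) = 0")
    case True then show ?thesis by (auto simp: st_def gh_def)
  next
    case False
    then have oi: "odd i" and ej: "even (m-i+1)" using th_even G_even by blast+
    have "sg i * sg (m-i+1) = sg (i + (m-i+1) - 1)" by (rule sg_oe[OF oi ej])
    also have "i + (m-i+1) - 1 = m" using i by simp
    finally have "sg i * sg (m-i+1) = sg m" .
    then show ?thesis unfolding s0_def st_def gh_def
      by (metis (no_types, lifting) mult.assoc mult.left_commute)
  qed
  have "real (m+1) * real (m+2) * gh k (m+2) = - s0 * (real (m+1) * (real (m+2) * Gk k $ (m+2)))"
    by (simp add: gh_def s0_def sg_def)
  also have "\<dots> = - s0 * (Gk (k-1) $ m - (\<Sum>i=0..m. th $ i * (real (m-i+1) * Gk k $ (m-i+1))))"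
  proof -
    have "real (m+1) * (real (m+2) * Gk k $ (m+2)) = Gk (k-1) $ m - (\<Sum>i=0..m. th $ i * (real (m-i+1) * Gk k $ (m-i+1)))"
      using G_rec[OF assms, of m] by (simp only: eq_diff_eq)
    then show ?thesis by (simp only:)
  qed
  also have "\<dots> = gh (k-1) m + (\<Sum>i=0..m. s0 * (th $ i * (real (m-i+1) * Gk k $ (m-i+1))))"
  proof -
    have h1: "- s0 * Gk (k-1) $ m = gh (k-1) m" by (simp add: s0_def gh_def km)
    have h2: "s0 * (\<Sum>i=0..m. th $ i * (real (m-i+1) * Gk k $ (m-i+1))) = (\<Sum>i=0..m. s0 * (th $ i * (real (m-i+1) * Gk k $ (m-i+1))))"
      by (rule sum_distrib_left)
    have gen: "\<And>a B S::real. -a*(B - S) = -a*B + a*S" by algebra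
    show ?thesis unfolding gen h1 h2 ..
  qed
  also have "(\<Sum>i=0..m. s0 * (th $ i * (real (m-i+1) * Gk k $ (m-i+1)))) = (\<Sum>i=0..m. real (m-i+1) * (st i * gh k (m-i+1)))"
    by (rule sum.cong[OF refl], rule t) simp
  finally show ?thesis .
qed

lemma gh0: "gh 0 m = (if m = 0 then 1 else 0)"
  by (simp add: gh_def G0 sg_def)

lemma gh_low: "m < 2*k \<Longrightarrow> gh k m = 0"
  by (simp add: gh_def Gk_low)

lemma gh1: "m \<ge> 1 \<Longrightarrow> gh 1 m = st (m-1)"
proof -
  assume m: "m \<ge> 1"
  have g: "Gk 1 $ m = th $ (m-1)" unfolding G1 using m by simp
  show ?thesis
  proof (cases "even (m-1)")
    case True then show ?thesis using g by (simp add: gh_def st_def th_even)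
  next
    case False
    have "sg (m-1) * sg 1 = - sg (m-1+1)" by (rule sg_oo[OF False]) simp
    then have "sg (m-1) = - sg m" using m by (simp add: sg_def)
    then show ?thesis using g by (simp add: gh_def st_def)
  qed
qed

lemma gh_abs: "\<bar>gh k m\<bar> = \<bar>Gk k $ m\<bar>"
  by (simp add: gh_def abs_mult sg_abs)


lemma st_nn: "st i \<ge> 0" using st_pos by blast

lemma main_ind:
  "\<forall>k. gh k m \<ge> 0 \<and> (k \<ge> 1 \<longrightarrow> 2 * gh k m \<ge> gh (k+1) m)
      \<and> (even m \<and> 1 \<le> k \<and> 2*k+2 \<le> m \<longrightarrow> 2 * gh k m > gh (k+1) m)"
proof (induction m rule: less_induct)
  case (less m)
  show ?case
  proof (cases "m < 2")
    case True
    show ?thesis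
    proof (intro allI)
      fix k
      show "gh k m \<ge> 0 \<and> (k \<ge> 1 \<longrightarrow> 2 * gh k m \<ge> gh (k+1) m)
        \<and> (even m \<and> 1 \<le> k \<and> 2*k+2 \<le> m \<longrightarrow> 2 * gh k m > gh (k+1) m)"
      proof (cases "k = 0")
        case True then show ?thesis using \<open>m < 2\<close> by (simp add: gh0 gh_low)
      next
        case False then show ?thesis using \<open>m < 2\<close> by (simp add: gh_low)
      qed
    qed
  next
    case False
    then obtain m0 where mm: "m = m0 + 2" by (metis add.commute le_Suc_ex not_less)
    have IH: "\<And>j k. j \<le> m0 + 1 \<Longrightarrow> gh k j \<ge> 0 \<and> (k \<ge> 1 \<longrightarrow> 2 * gh k j \<ge> gh (k+1) j)
      \<and> (even j \<and> 1 \<le> k \<and> 2*k+2 \<le> j \<longrightarrow> 2 * gh k j > gh (k+1) j)"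
      using less.IH mm by simp
    define c where "c = real (m0+1) * real (m0+2)"
    have cpos: "c > 0" by (simp add: c_def)
    define W where "W k' = (\<Sum>i=0..m0. real (m0-i+1) * (st i * gh k' (m0-i+1)))" for k'
    have R: "c * gh k' m = gh (k'-1) m0 + W k'" if "k' \<ge> 1" for k'
      unfolding c_def W_def mm using gh_rec[OF that, of m0] by (simp add: add.commute)
    have Wnn: "W k' \<ge> 0" for k'
      unfolding W_def by (intro sum_nonneg mult_nonneg_nonneg st_nn) (use IH in auto)
    define V where "V k' = (\<Sum>i=0..m0. real (m0-i+1) * (st i * (2 * gh k' (m0-i+1) - gh (k'+1) (m0-i+1))))" for k'
    have WV: "2 * W k' - W (k'+1) = V k'" for k'
      unfolding W_def V_def by (simp add: sum_distrib_left sum_subtractf[symmetric] algebra_simps)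
    have Vnn: "V k' \<ge> 0" if "k' \<ge> 1" for k'
      unfolding V_def using that by (intro sum_nonneg mult_nonneg_nonneg st_nn) (use IH in auto)
    have D: "c * (2 * gh k' m - gh (k'+1) m) = (2 * gh (k'-1) m0 - gh k' m0) + V k'" if "k' \<ge> 1" for k'
    proof -
      have "c * (2 * gh k' m - gh (k'+1) m) = 2 * (c * gh k' m) - c * gh (k'+1) m" by (simp add: algebra_simps)
      also have "\<dots> = 2 * (gh (k'-1) m0 + W k') - (gh k' m0 + W (k'+1))" using R[OF that] R[of "k'+1"] by simp
      also have "\<dots> = (2 * gh (k'-1) m0 - gh k' m0) + (2 * W k' - W (k'+1))" by simp
      finally show ?thesis using WV by simp
    qed
    show ?thesis
    proof (intro allI)
      fix k
      have nn: "gh k m \<ge> 0"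
      proof (cases "k = 0")
        case True then show ?thesis using mm by (simp add: gh0)
      next
        case False
        then have "c * gh k m \<ge> 0" using R[of k] Wnn[of k] IH[of m0 "k-1"] by simp
        then show ?thesis using cpos by (simp add: zero_le_mult_iff)
      qed
      have ineq: "(k \<ge> 1 \<longrightarrow> c * (2 * gh k m - gh (k+1) m) \<ge> 0)
         \<and> (even m \<and> 1 \<le> k \<and> 2*k+2 \<le> m \<longrightarrow> c * (2 * gh k m - gh (k+1) m) > 0)"
      proof (cases "k \<ge> 2")
        case True
        have k1: "k - 1 \<ge> 1" "k - 1 + 1 = k" using True by auto
        have A: "2 * gh (k-1) m0 - gh k m0 \<ge> 0" using IH[of m0 "k-1"] k1 by simp
        have B: "even m \<and> 2*k+2 \<le> m \<longrightarrow> 2 * gh (k-1) m0 - gh k m0 > 0"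
          using IH[of m0 "k-1"] k1 mm by auto
        show ?thesis using D[of k] Vnn[of k] A B True by auto
      next
        case False
        show ?thesis
        proof (cases "k = 1")
          case False
          then show ?thesis using \<open>\<not> k \<ge> 2\<close> by simp
        next
          case k1: True
          show ?thesis
          proof (cases "m0 = 0")
            case True
            have "2 * gh 0 m0 - gh 1 m0 = 2" using True by (simp add: gh0 gh_low)
            then show ?thesis using D[of 1] Vnn[of 1] k1 by simp
          next
            case False
            have g0: "gh 0 m0 = 0" using False by (simp add: gh0)
            have g1: "gh 1 m0 = st (m0-1)" using False gh1[of m0] by simp
            have g12: "gh 1 2 = 1/2" using gh1[of 2] th1 by (simp add: st_def sg_def)
            have g22: "gh 2 2 = 0" by (simp add: gh_low)
            have "real (m0 - (m0-1) + 1) * (st (m0-1) * (2 * gh 1 (m0 - (m0-1) + 1) - gh (1+1) (m0 - (m0-1) + 1))) \<le> V 1"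
              unfolding V_def
              by (rule member_le_sum[of "m0-1" "{0..m0}" "\<lambda>i. real (m0-i+1) * (st i * (2 * gh 1 (m0-i+1) - gh (1+1) (m0-i+1)))"])
                 (use IH in \<open>auto intro!: mult_nonneg_nonneg st_nn\<close>)
            moreover have e2: "m0 - (m0-1) + 1 = 2" using False by simp
            ultimately have "real 2 * (st (m0-1) * (2 * gh 1 2 - gh 2 2)) \<le> V 1"
              by (simp only: e2 one_add_one)
            then have "2 * st (m0-1) \<le> V 1" unfolding g12 g22 by simp
            then have tot: "c * (2 * gh 1 m - gh (1+1) m) \<ge> st (m0-1)" using D[of 1] g0 g1 by simp
            have "even m \<longrightarrow> st (m0-1) > 0"
            proof
              assume "even m"
              then have "odd (m0-1)" using mm False by simp
              then show "st (m0-1) > 0" using st_pos by blast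
            qed
            then show ?thesis using tot k1 st_nn[of "m0-1"] by auto
          qed
        qed
      qed
      show "gh k m \<ge> 0 \<and> (k \<ge> 1 \<longrightarrow> 2 * gh k m \<ge> gh (k+1) m)
        \<and> (even m \<and> 1 \<le> k \<and> 2*k+2 \<le> m \<longrightarrow> 2 * gh k m > gh (k+1) m)"
        using nn ineq cpos by (auto simp: zero_less_mult_iff zero_le_mult_iff)
    qed
  qed
qed


lemma eps_gh: "salie_eps n k = fact (2*n) * gh k (2*n) / 4^k"
proof -
  have "salie n k = fact (2*n) * Gk k $ (2*n)" by (simp add: salie_def Gk_def)
  then have "\<bar>salie n k\<bar> = fact (2*n) * \<bar>gh k (2*n)\<bar>" by (simp add: abs_mult gh_abs)
  also have "\<bar>gh k (2*n)\<bar> = gh k (2*n)" using main_ind[of "2*n"] by simp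
  finally show ?thesis by (simp add: salie_eps_def)
qed

lemma eps_nn: "salie_eps n k \<ge> 0"
  by (simp add: salie_eps_def)

lemma eps_step:
  assumes "1 \<le> l" "l + 1 \<le> n"
  shows "salie_eps n l > 2 * salie_eps n (l+1)"
proof -
  have g: "2 * gh l (2*n) > gh (l+1) (2*n)" using main_ind[of "2*n"] assms by auto
  have F: "fact (2*n) / (2 * 4^l) > (0::real)" by simp
  have "salie_eps n l - 2 * salie_eps n (l+1) = fact (2*n) / (2 * 4^l) * (2 * gh l (2*n) - gh (l+1) (2*n))"
    unfolding eps_gh by (simp add: field_simps)
  also have "\<dots> > 0" using F g by simp
  finally show ?thesis by simp
qed

theorem mainTheorem8:
  fixes n k :: nat
  assumes "n > 1" and "1 \<le> k" and "k \<le> n - 1"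
  shows "salie_eps n k > 2 * salie_eps n (k + 1)
       \<and> salie_eps n k > (\<Sum>l = k + 1..n. salie_eps n l)"
proof -
  let ?e = "salie_eps n"
  have first: "?e k > 2 * ?e (k+1)" using eps_step assms by simp
  have claim: "\<forall>d. d \<le> n - (k+1) \<longrightarrow> ?e (n-d) \<ge> (\<Sum>l = n-d+1..n. ?e l) + ?e n"
  proof (intro allI)
    fix d
    show "d \<le> n - (k+1) \<longrightarrow> ?e (n-d) \<ge> (\<Sum>l = n-d+1..n. ?e l) + ?e n"
    proof (induction d)
      case 0 then show ?case by simp
    next
      case (Suc d)
      show ?case
      proof
        assume d: "Suc d \<le> n - (k+1)"
        have j: "n - Suc d + 1 = n - d" using d by simp
        have st1: "?e (n - Suc d) > 2 * ?e (n - d)"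
          using eps_step[of "n - Suc d" n] d assms j by simp
        have IHd: "?e (n-d) \<ge> (\<Sum>l = n-d+1..n. ?e l) + ?e n" using Suc.IH d by simp
        have sp: "(\<Sum>l = n - d..n. ?e l) = ?e (n-d) + (\<Sum>l = n-d+1..n. ?e l)"
          using sum.atLeast_Suc_atMost[of "n-d" n ?e] by simp
        show "?e (n - Suc d) \<ge> (\<Sum>l = n - Suc d + 1..n. ?e l) + ?e n"
          unfolding j sp using st1 IHd by simp
      qed
    qed
  qed
  have c1: "?e (k+1) \<ge> (\<Sum>l = k+2..n. ?e l) + ?e n"
    using claim[rule_format, of "n-(k+1)"] assms by (simp add: Suc_diff_le)
  have sp: "(\<Sum>l = k+1..n. ?e l) = ?e (k+1) + (\<Sum>l = k+2..n. ?e l)"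
    using sum.atLeast_Suc_atMost[of "k+1" n ?e] assms by simp
  have "?e k > (\<Sum>l = k+1..n. ?e l)"
    unfolding sp using first c1 eps_nn[of n n] by simp
  with first show ?thesis by simp
qed

end
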